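(* For all $\alpha\ge1/2$ and $\rho>1/2$, $$\sup_{k\in\mathbb Z\setminus\{0\}}|k|^{2+2\alpha}\sum_{*}|k_1k_2k_3|^{-2\alpha}\frac{1}{|k-k_1|^{2\rho}|k-k_2|^{2\rho}|k-k_3|^{2\rho}}<+\infty,$$ where $\sum_*$ denotes the sum over $(k_1,k_2,k_3)\in\mathbb Z^3$ with $k_1+k_2+k_3=k$, $k_1k_2k_3\ne0$ and $k_2\ne k$, $k_3\ne k$. *)

theory Defs
  imports "HOL-Analysis.Analysis"
begin

definition star_set :: "int \<Rightarrow> (int \<times> int \<times> int) set" where
  "star_set k = {(k1, k2, k3). k1 + k2 + k3 = k \<and> k1 * k2 * k3 \<noteq> 0 \<and> k2 \<noteq> k \<and> k3 \<noteq> k}"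

text \<open>Summand; note real division by zero gives 0 in Isabelle.\<close>
definition star_term :: "real \<Rightarrow> real \<Rightarrow> int \<Rightarrow> int \<times> int \<times> int \<Rightarrow> real" where
  "star_term \<alpha> \<rho> k x = (case x of (k1, k2, k3) \<Rightarrow>
     \<bar>real_of_int (k1 * k2 * k3)\<bar> powr (-2 * \<alpha>) /
     (\<bar>real_of_int (k - k1)\<bar> powr (2 * \<rho>) *
      \<bar>real_of_int (k - k2)\<bar> powr (2 * \<rho>) *
      \<bar>real_of_int (k - k3)\<bar> powr (2 * \<rho>)))"

end

theory Submission
  imports Defs
begin


lemma caseI_core:
  fixes a r K xi xj :: real
  assumes "a \<ge> 1" "r > 1" "1 \<le> xi" "xi \<le> K" "1 \<le> xj" "xj \<le> K"
  shows "K powr (2+a) * ((xi*xj*(2*K/3)) powr (-a) / (K/2) powr (2*r))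
       \<le> (3/2) powr a * 4 powr r * (xi powr (-r) * xj powr (-r))"
proof -
  have K: "K > 0" using assms by linarith
  have xi: "xi > 0" "xj > 0" using assms by auto
  have l1: "0 \<le> ln xi" "ln xi \<le> ln K" "0 \<le> ln xj" "ln xj \<le> ln K" using assms xi K by auto
  have m1: "(r - a) * ln xi \<le> (r-1) * ln K"
  proof -
    have "(r - a) * ln xi \<le> (r-1) * ln xi" using assms l1 by (intro mult_right_mono) auto
    also have "\<dots> \<le> (r-1) * ln K" using assms l1 by (intro mult_left_mono) auto
    finally show ?thesis .
  qed
  have m2: "(r - a) * ln xj \<le> (r-1) * ln K"
  proof -
    have "(r - a) * ln xj \<le> (r-1) * ln xj" using assms l1 by (intro mult_right_mono) auto
    also have "\<dots> \<le> (r-1) * ln K" using assms l1 by (intro mult_left_mono) auto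
    finally show ?thesis .
  qed
  have l4: "ln (4::real) = 2 * ln 2" using ln_realpow[of 2 2] by simp
  have "(2+a) * ln K + (-a) * (ln xi + ln xj + (ln 2 + ln K - ln 3)) - 2*r*(ln K - ln 2)
     \<le> a * (ln 3 - ln 2) + r * ln 4 + (-r) * ln xi + (-r) * ln xj"
    using m1 m2 l4 by (simp add: algebra_simps)
  then show ?thesis using K xi
    by (simp add: powr_def ln_mult ln_div exp_add[symmetric] exp_diff[symmetric] algebra_simps)
qed

lemma caseII_core:
  fixes a r K :: real
  assumes "a \<ge> 1" "K \<ge> 1"
  shows "K powr (2+a) * (K/6) powr (-2*a) * K powr (-1) \<le> 36 powr a"
proof -
  have K: "K > 0" using assms by linarith
  have l: "ln (36::real) = 2 * ln 6" using ln_realpow[of 6 2] by simp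
  have "0 \<le> ln K" using assms by simp
  then have "(1 - a) * ln K \<le> 0" using assms by (simp add: mult_nonpos_nonneg)
  then have "(2+a) * ln K + (-2*a) * (ln K - ln 6) + (-1) * ln K \<le> a * ln 36"
    using l by (simp add: algebra_simps)
  then show ?thesis using K
    by (simp add: powr_def ln_mult ln_div exp_add[symmetric] exp_diff[symmetric] algebra_simps)
qed

lemma caseI:
  fixes a r K xi xj P Y :: real
  assumes "a \<ge> 1" "r > 1" "1 \<le> xi" "xi \<le> K" "1 \<le> xj" "xj \<le> K"
    "xi*xj*(2*K/3) \<le> P" "(K/2) powr (2*r) \<le> Y"
  shows "K powr (2+a) * (P powr (-a) / Y) \<le> (3/2) powr a * 4 powr r * (xi powr (-r) * xj powr (-r))"
proof -
  have K: "K > 0" using assms by linarith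
  have Q: "xi*xj*(2*K/3) > 0" using assms K by simp
  have "P powr (-a) \<le> (xi*xj*(2*K/3)) powr (-a)"
    using assms Q by (intro powr_mono2') auto
  moreover have "(K/2) powr (2*r) > 0" using K by simp
  ultimately have "P powr (-a) / Y \<le> (xi*xj*(2*K/3)) powr (-a) / (K/2) powr (2*r)"
    using assms by (intro frac_le) auto
  then have "K powr (2+a) * (P powr (-a) / Y) \<le> K powr (2+a) * ((xi*xj*(2*K/3)) powr (-a) / (K/2) powr (2*r))"
    by (intro mult_left_mono) auto
  also have "\<dots> \<le> (3/2) powr a * 4 powr r * (xi powr (-r) * xj powr (-r))"
    using caseI_core[OF assms(1-6)] .
  finally show ?thesis .
qed

lemma caseII:
  fixes a r K ym yp yq P :: real
  assumes "a \<ge> 1" "r > 1" "K \<ge> 1" "(K/6)*(K/6) \<le> P" "2*K/3 \<le> ym" "1 \<le> ym" "0 < yp" "0 < yq"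
  shows "K powr (2+a) * (P powr (-a) / (ym powr r * yp powr r * yq powr r))
     \<le> 36 powr a * 2 * (yp powr (-r) * yq powr (-r))"
proof -
  have K: "K > 0" using assms by linarith
  have "P powr (-a) \<le> ((K/6)*(K/6)) powr (-a)"
    using assms K by (intro powr_mono2') auto
  also have "\<dots> = (K/6) powr (-2*a)"
    by (simp only: powr_mult powr_add[symmetric]) simp
  finally have p: "P powr (-a) \<le> (K/6) powr (-2*a)" .
  have "ym powr 1 \<le> ym powr r" using assms by (intro powr_mono) auto
  then have ym: "2*K/3 \<le> ym powr r" using assms by simp
  have e: "P powr (-a) / (ym powr r * yp powr r * yq powr r) = (P powr (-a) / ym powr r) * (yp powr (-r) * yq powr (-r))"
    by (simp add: powr_minus field_simps)
  have "P powr (-a) / ym powr r \<le> (K/6) powr (-2*a) / (2*K/3)"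
    using p ym K by (intro frac_le) auto
  then have "K powr (2+a) * (P powr (-a) / ym powr r) \<le> K powr (2+a) * ((K/6) powr (-2*a) / (2*K/3))"
    by (intro mult_left_mono) auto
  also have "\<dots> = 3/2 * (K powr (2+a) * (K/6) powr (-2*a) * K powr (-1))"
    using K by (simp add: powr_minus field_simps)
  also have "\<dots> \<le> 3/2 * 36 powr a"
    using caseII_core[OF assms(1,3)] by simp
  also have "\<dots> \<le> 36 powr a * 2" by simp
  finally have c: "K powr (2+a) * (P powr (-a) / ym powr r) \<le> 36 powr a * 2" .
  show ?thesis unfolding e
    using mult_right_mono[OF c, of "yp powr (-r) * yq powr (-r)"] by (simp add: mult.assoc)
qed

lemma Ybound:
  fixes K r u v w :: real
  assumes "K > 0" "r \<ge> 0" "K/2 \<le> u" "K/2 \<le> v" "1 \<le> w"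
  shows "(K/2) powr (2*r) \<le> u powr r * v powr r * w powr r"
proof -
  have "(K/2) powr (2*r) = (K/2) powr r * (K/2) powr r * 1"
    by (simp add: powr_add[symmetric])
  also have "\<dots> \<le> u powr r * v powr r * w powr r"
    using assms by (intro mult_mono powr_mono2 ge_one_powr_ge_zero) auto
  finally show ?thesis .
qed

lemma Pbound:
  fixes K u v w :: real
  assumes "K > 0" "K/6 \<le> u" "K/6 \<le> v" "1 \<le> w"
  shows "(K/6)*(K/6) \<le> u * v * w"
proof -
  have "(K/6)*(K/6) \<le> u * v" using assms by (intro mult_mono) auto
  also have "\<dots> \<le> u * v * w" using assms mult_left_mono[of 1 w "u * v"] by simp
  finally show ?thesis .
qed

lemma absorb:
  fixes c1 c2 t G :: real
  assumes "0 \<le> c1" "0 \<le> c2" "0 \<le> t" "t \<le> G"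
  shows "c1 * t \<le> (c1+c2) * G" "c2 * t \<le> (c1+c2) * G"
proof -
  have "c1 * t \<le> c1 * G" "c2 * t \<le> c2 * G" using assms by (auto intro: mult_left_mono)
  moreover have "0 \<le> c1 * G" "0 \<le> c2 * G" using assms by auto
  ultimately show "c1 * t \<le> (c1+c2) * G" "c2 * t \<le> (c1+c2) * G" by (auto simp: distrib_right)
qed

lemma pointwise_real:
  fixes a r K x1 x2 x3 y1 y2 y3 :: real
  assumes a: "a \<ge> 1" and r: "r > 1" and K: "K \<ge> 1"
    and x: "1 \<le> x1" "1 \<le> x2" "1 \<le> x3" and y: "1 \<le> y1" "1 \<le> y2" "1 \<le> y3"
    and t: "K \<le> x1 + x2 + x3" "K \<le> x1 + y1" "K \<le> x2 + y2" "K \<le> x3 + y3"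
      "2*K \<le> y1 + y2 + y3"
  shows "K powr (2+a) * ((x1*x2*x3) powr (-a) / (y1 powr r * y2 powr r * y3 powr r))
    \<le> ((3/2) powr a * 4 powr r + 36 powr a * 2) *
      (x1 powr (-r) * x2 powr (-r) + x1 powr (-r) * x3 powr (-r) + x2 powr (-r) * x3 powr (-r)
     + y1 powr (-r) * y2 powr (-r) + y1 powr (-r) * y3 powr (-r) + y2 powr (-r) * y3 powr (-r))"
    (is "?L \<le> (?c1 + ?c2) * ?G")
proof -
  have Kp: "K > 0" using K by linarith
  have c: "0 \<le> ?c1" "0 \<le> ?c2" by auto
  have nn: "\<And>u v. 0 \<le> u powr (-r) * v powr (-r)" by simp
  have G: "x1 powr (-r) * x2 powr (-r) \<le> ?G" "x1 powr (-r) * x3 powr (-r) \<le> ?G"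
     "x2 powr (-r) * x3 powr (-r) \<le> ?G" "y1 powr (-r) * y2 powr (-r) \<le> ?G"
     "y1 powr (-r) * y3 powr (-r) \<le> ?G" "y2 powr (-r) * y3 powr (-r) \<le> ?G"
    using nn[of x1 x2] nn[of x1 x3] nn[of x2 x3] nn[of y1 y2] nn[of y1 y3] nn[of y2 y3] by linarith+
  note ab = absorb[OF c nn]
  show ?thesis
  proof (cases "x1 \<le> K/6 \<and> x2 \<le> K/6")
    case True
    have "?L \<le> ?c1 * (x1 powr (-r) * x2 powr (-r))"
    proof (rule caseI[OF a r])
      show "x1*x2*(2*K/3) \<le> x1*x2*x3" using True t x by (intro mult_left_mono) auto
      show "(K/2) powr (2*r) \<le> y1 powr r * y2 powr r * y3 powr r"
        using True t x y Kp r by (intro Ybound) auto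
    qed (use True x Kp in auto)
    then show ?thesis using ab(1)[OF G(1)] by linarith
  next
    case F1: False
    show ?thesis
    proof (cases "x1 \<le> K/6 \<and> x3 \<le> K/6")
      case True
      have "?L \<le> ?c1 * (x1 powr (-r) * x3 powr (-r))"
      proof -
        have "?L = K powr (2+a) * ((x1*x3*x2) powr (-a) / (y1 powr r * y3 powr r * y2 powr r))"
          by (simp add: mult_ac)
        also have "\<dots> \<le> ?c1 * (x1 powr (-r) * x3 powr (-r))"
        proof (rule caseI[OF a r])
          show "x1*x3*(2*K/3) \<le> x1*x3*x2" using True t x by (intro mult_left_mono) auto
          show "(K/2) powr (2*r) \<le> y1 powr r * y3 powr r * y2 powr r"
            using True t x y Kp r by (intro Ybound) auto
        qed (use True x Kp in auto)
        finally show ?thesis .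
      qed
      then show ?thesis using ab(1)[OF G(2)] by linarith
    next
      case F2: False
      show ?thesis
      proof (cases "x2 \<le> K/6 \<and> x3 \<le> K/6")
        case True
        have "?L \<le> ?c1 * (x2 powr (-r) * x3 powr (-r))"
        proof -
          have "?L = K powr (2+a) * ((x2*x3*x1) powr (-a) / (y2 powr r * y3 powr r * y1 powr r))"
            by (simp add: mult_ac)
          also have "\<dots> \<le> ?c1 * (x2 powr (-r) * x3 powr (-r))"
          proof (rule caseI[OF a r])
            show "x2*x3*(2*K/3) \<le> x2*x3*x1" using True t x by (intro mult_left_mono) auto
            show "(K/2) powr (2*r) \<le> y2 powr r * y3 powr r * y1 powr r"
              using True t x y Kp r by (intro Ybound) auto
          qed (use True x Kp in auto)
          finally show ?thesis .
        qed
        then show ?thesis using ab(1)[OF G(3)] by linarith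
      next
        case F3: False
        have P: "(K/6)*(K/6) \<le> x1*x2*x3"
        proof -
          consider "K/6 \<le> x1" "K/6 \<le> x2" | "K/6 \<le> x1" "K/6 \<le> x3" | "K/6 \<le> x2" "K/6 \<le> x3"
            using F1 F2 F3 by linarith
          then show ?thesis
          proof cases
            case 1 then show ?thesis using Pbound[OF Kp _ _ x(3)] by auto
          next
            case 2 then show ?thesis using Pbound[OF Kp _ _ x(2), of x1 x3] by (simp add: mult_ac)
          next
            case 3 then show ?thesis using Pbound[OF Kp _ _ x(1), of x2 x3] by (simp add: mult_ac)
          qed
        qed
        consider "2*K/3 \<le> y1" | "2*K/3 \<le> y2" | "2*K/3 \<le> y3" using t by linarith
        then show ?thesis
        proof cases
          case 1
          have "?L \<le> ?c2 * (y2 powr (-r) * y3 powr (-r))"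
            using caseII[OF a r K P 1 y(1)] y by auto
          then show ?thesis using ab(2)[OF G(6)] by linarith
        next
          case 2
          have "?L = K powr (2+a) * ((x1*x2*x3) powr (-a) / (y2 powr r * y1 powr r * y3 powr r))"
            by (simp add: mult_ac)
          also have "\<dots> \<le> ?c2 * (y1 powr (-r) * y3 powr (-r))"
            using caseII[OF a r K P 2 y(2)] y by auto
          finally show ?thesis using ab(2)[OF G(5)] by linarith
        next
          case 3
          have "?L = K powr (2+a) * ((x1*x2*x3) powr (-a) / (y3 powr r * y1 powr r * y2 powr r))"
            by (simp add: mult_ac)
          also have "\<dots> \<le> ?c2 * (y1 powr (-r) * y2 powr (-r))"
            using caseII[OF a r K P 3 y(3)] y by auto
          finally show ?thesis using ab(2)[OF G(4)] by linarith
        qed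
      qed
    qed
  qed
qed



definition hh :: "real \<Rightarrow> int \<Rightarrow> real" where "hh r n = \<bar>real_of_int n\<bar> powr (-r)"
definition HH :: "real \<Rightarrow> int \<times> int \<Rightarrow> real" where "HH r z = hh r (fst z) * hh r (snd z)"

lemma hh_nonneg: "0 \<le> hh r n" by (simp add: hh_def)
lemma HH_nonneg: "0 \<le> HH r z" by (simp add: HH_def hh_nonneg)

lemma hh_summable:
  assumes "r > 1"
  shows "hh r summable_on UNIV"
proof -
  have s: "summable (\<lambda>n::nat. real n powr (-r))" using assms summable_real_powr_iff[of "-r"] by simp
  have n: "(\<lambda>n::nat. real n powr (-r)) summable_on UNIV"
    by (rule norm_summable_imp_summable_on) (use s in simp)
  have "(hh r \<circ> int) = (\<lambda>n::nat. real n powr (-r))" by (auto simp: hh_def)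
  then have a: "hh r summable_on range int"
    using n summable_on_reindex[of int UNIV "hh r"] by simp
  have "(hh r \<circ> (\<lambda>n. - int n)) = (\<lambda>n::nat. real n powr (-r))" by (auto simp: hh_def)
  moreover have "inj (\<lambda>n::nat. - int n)" by (auto simp: inj_def)
  ultimately have b: "hh r summable_on range (\<lambda>n::nat. - int n)"
    using n summable_on_reindex[of "\<lambda>n::nat. - int n" UNIV "hh r"] by simp
  have "UNIV = range int \<union> range (\<lambda>n::nat. - int n)"
  proof (rule set_eqI, rule iffI)
    fix z :: int
    show "z \<in> range int \<union> range (\<lambda>n::nat. - int n)"
    proof (cases "z \<ge> 0")
      case True then have "z = int (nat z)" by simp
      then show ?thesis by blast
    next
      case False then have "z = - int (nat (-z))" by simp
      then show ?thesis by blast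
    qed
  qed simp
  then show ?thesis using summable_on_union[OF a b] by simp
qed

lemma HH_summable:
  assumes "r > 1"
  shows "HH r summable_on UNIV"
proof -
  have "HH r summable_on Sigma UNIV (\<lambda>_. UNIV)"
  proof (rule summable_on_SigmaI[where g = "\<lambda>x. hh r x * infsum (hh r) UNIV"])
    fix x :: int
    show "((\<lambda>y. HH r (x, y)) has_sum hh r x * infsum (hh r) UNIV) UNIV"
      unfolding HH_def fst_conv snd_conv
      by (rule has_sum_cmult_right) (use hh_summable[OF assms] in auto)
  next
    show "(\<lambda>x. hh r x * infsum (hh r) UNIV) summable_on UNIV"
      by (rule summable_on_cmult_left) (rule hh_summable[OF assms])
  qed (simp add: HH_nonneg)
  then show ?thesis by simp
qed

lemma fam:
  assumes "inj_on \<phi> A" "r > 1"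
  shows "(HH r \<circ> \<phi>) summable_on A" "infsum (HH r \<circ> \<phi>) A \<le> infsum (HH r) UNIV"
proof -
  have s: "HH r summable_on (\<phi> ` A)"
    by (rule summable_on_subset_banach[OF HH_summable[OF assms(2)]]) auto
  then show "(HH r \<circ> \<phi>) summable_on A" using summable_on_reindex[OF assms(1)] by blast
  have "infsum (HH r \<circ> \<phi>) A = infsum (HH r) (\<phi> ` A)" using infsum_reindex[OF assms(1), of "HH r"] by simp
  also have "\<dots> \<le> infsum (HH r) UNIV"
    by (rule infsum_mono_neutral[OF s HH_summable[OF assms(2)]]) (auto simp: HH_nonneg)
  finally show "infsum (HH r \<circ> \<phi>) A \<le> infsum (HH r) UNIV" .
qed


lemma one_le_abs_int: "(n::int) \<noteq> 0 \<Longrightarrow> 1 \<le> \<bar>real_of_int n\<bar>"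
  by (metis of_int_1_le_iff of_int_abs zero_less_abs_iff int_one_le_iff_zero_less)
lemma tri3: "(k::int) = k1 + k2 + k3 \<Longrightarrow> \<bar>real_of_int k\<bar> \<le> \<bar>real_of_int k1\<bar> + \<bar>real_of_int k2\<bar> + \<bar>real_of_int k3\<bar>"
  by (simp add: abs_triangle_ineq order_trans[OF abs_triangle_ineq] add_mono)
lemma tri2: "\<bar>real_of_int k\<bar> \<le> \<bar>real_of_int k1\<bar> + \<bar>real_of_int (k - k1)\<bar>"
  by (metis abs_triangle_ineq add_diff_cancel_left' diff_add_cancel of_int_add)
lemma tri2b: "(k::int) = k1 + k2 + k3 \<Longrightarrow> 2 * \<bar>real_of_int k\<bar> \<le> \<bar>real_of_int (k - k1)\<bar> + \<bar>real_of_int (k - k2)\<bar> + \<bar>real_of_int (k - k3)\<bar>"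
proof -
  assume h: "k = k1 + k2 + k3"
  have "\<bar>real_of_int (2*k)\<bar> \<le> \<bar>real_of_int (k - k1)\<bar> + \<bar>real_of_int (k - k2)\<bar> + \<bar>real_of_int (k - k3)\<bar>"
    by (rule tri3) (use h in simp)
  then show ?thesis by simp
qed

lemma pointwise_int:
  fixes \<alpha> \<rho> :: real and k k1 k2 k3 :: int
  assumes "\<alpha> \<ge> 1/2" "\<rho> > 1/2" "k \<noteq> 0" "(k1,k2,k3) \<in> star_set k"
  shows "\<bar>real_of_int k\<bar> powr (2 + 2*\<alpha>) * star_term \<alpha> \<rho> k (k1,k2,k3)
    \<le> ((3/2) powr (2*\<alpha>) * 4 powr (2*\<rho>) + 36 powr (2*\<alpha>) * 2) *
      (HH (2*\<rho>) (k1,k2) + HH (2*\<rho>) (k1,k3) + HH (2*\<rho>) (k2,k3)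
     + HH (2*\<rho>) (k-k1,k-k2) + HH (2*\<rho>) (k-k1,k-k3) + HH (2*\<rho>) (k-k2,k-k3))"
proof -
  from assms(4) have s: "k = k1 + k2 + k3" "k1 \<noteq> 0" "k2 \<noteq> 0" "k3 \<noteq> 0" "k2 \<noteq> k" "k3 \<noteq> k"
    by (auto simp: star_set_def)
  have Gnn: "0 \<le> HH (2*\<rho>) (k1,k2) + HH (2*\<rho>) (k1,k3) + HH (2*\<rho>) (k2,k3)
     + HH (2*\<rho>) (k-k1,k-k2) + HH (2*\<rho>) (k-k1,k-k3) + HH (2*\<rho>) (k-k2,k-k3)"
    by (simp add: HH_nonneg add_nonneg_nonneg)
  have cnn: "0 \<le> ((3/2) powr (2*\<alpha>) * 4 powr (2*\<rho>) + 36 powr (2*\<alpha>) * 2)" by simp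
  show ?thesis
  proof (cases "k - k1 = 0")
    case True
    then have "star_term \<alpha> \<rho> k (k1,k2,k3) = 0" by (simp add: star_term_def)
    then show ?thesis using Gnn cnn by simp
  next
    case False
    have e: "star_term \<alpha> \<rho> k (k1,k2,k3) = (\<bar>real_of_int k1\<bar> * \<bar>real_of_int k2\<bar> * \<bar>real_of_int k3\<bar>) powr (-(2*\<alpha>))
       / (\<bar>real_of_int (k-k1)\<bar> powr (2*\<rho>) * \<bar>real_of_int (k-k2)\<bar> powr (2*\<rho>) * \<bar>real_of_int (k-k3)\<bar> powr (2*\<rho>))"
      by (simp add: star_term_def abs_mult)
    have "\<bar>real_of_int k\<bar> powr (2 + 2*\<alpha>) * star_term \<alpha> \<rho> k (k1,k2,k3)
      \<le> ((3/2) powr (2*\<alpha>) * 4 powr (2*\<rho>) + 36 powr (2*\<alpha>) * 2) *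
      (\<bar>real_of_int k1\<bar> powr (-(2*\<rho>)) * \<bar>real_of_int k2\<bar> powr (-(2*\<rho>))
     + \<bar>real_of_int k1\<bar> powr (-(2*\<rho>)) * \<bar>real_of_int k3\<bar> powr (-(2*\<rho>))
     + \<bar>real_of_int k2\<bar> powr (-(2*\<rho>)) * \<bar>real_of_int k3\<bar> powr (-(2*\<rho>))
     + \<bar>real_of_int (k-k1)\<bar> powr (-(2*\<rho>)) * \<bar>real_of_int (k-k2)\<bar> powr (-(2*\<rho>))
     + \<bar>real_of_int (k-k1)\<bar> powr (-(2*\<rho>)) * \<bar>real_of_int (k-k3)\<bar> powr (-(2*\<rho>))
     + \<bar>real_of_int (k-k2)\<bar> powr (-(2*\<rho>)) * \<bar>real_of_int (k-k3)\<bar> powr (-(2*\<rho>)))"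
      unfolding e
    proof (rule pointwise_real)
      show "1 \<le> 2*\<alpha>" "1 < 2*\<rho>" using assms by auto
      show "1 \<le> \<bar>real_of_int k\<bar>" using assms one_le_abs_int by blast
      show "1 \<le> \<bar>real_of_int k1\<bar>" "1 \<le> \<bar>real_of_int k2\<bar>" "1 \<le> \<bar>real_of_int k3\<bar>"
        using s one_le_abs_int by blast+
      show "1 \<le> \<bar>real_of_int (k-k1)\<bar>" "1 \<le> \<bar>real_of_int (k-k2)\<bar>" "1 \<le> \<bar>real_of_int (k-k3)\<bar>"
        using s False one_le_abs_int by auto
      show "\<bar>real_of_int k\<bar> \<le> \<bar>real_of_int k1\<bar> + \<bar>real_of_int k2\<bar> + \<bar>real_of_int k3\<bar>"
        using tri3[OF s(1)] .
      show "\<bar>real_of_int k\<bar> \<le> \<bar>real_of_int k1\<bar> + \<bar>real_of_int (k-k1)\<bar>"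
        "\<bar>real_of_int k\<bar> \<le> \<bar>real_of_int k2\<bar> + \<bar>real_of_int (k-k2)\<bar>"
        "\<bar>real_of_int k\<bar> \<le> \<bar>real_of_int k3\<bar> + \<bar>real_of_int (k-k3)\<bar>"
        using tri2 by blast+
      show "2 * \<bar>real_of_int k\<bar> \<le> \<bar>real_of_int (k-k1)\<bar> + \<bar>real_of_int (k-k2)\<bar> + \<bar>real_of_int (k-k3)\<bar>"
        using tri2b[OF s(1)] .
    qed
    then show ?thesis by (simp add: HH_def hh_def)
  qed
qed

theorem mainTheorem11:
  fixes \<alpha> \<rho> :: real
  assumes "\<alpha> \<ge> 1/2" and "\<rho> > 1/2"
  shows "\<exists>C::real. \<forall>k::int. k \<noteq> 0 \<longrightarrow>
     star_term \<alpha> \<rho> k summable_on star_set k \<and>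
     \<bar>real_of_int k\<bar> powr (2 + 2 * \<alpha>) * (\<Sum>\<^sub>\<infinity>x\<in>star_set k. star_term \<alpha> \<rho> k x) \<le> C"
proof -
  define r where "r = 2*\<rho>"
  have r: "r > 1" using assms by (simp add: r_def)
  define Cst where "Cst = (3/2) powr (2*\<alpha>) * 4 powr (2*\<rho>) + 36 powr (2*\<alpha>) * 2"
  define S2 where "S2 = infsum (HH r) UNIV"
  have Cnn: "0 \<le> Cst" by (simp add: Cst_def)
  show ?thesis
  proof (rule exI[of _ "Cst * (6 * S2)"], intro allI impI)
    fix k :: int assume k: "k \<noteq> 0"
    define p12 where "p12 = (\<lambda>(k1::int,k2::int,k3::int). (k1,k2))"
    define p13 where "p13 = (\<lambda>(k1::int,k2::int,k3::int). (k1,k3))"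
    define p23 where "p23 = (\<lambda>(k1::int,k2::int,k3::int). (k2,k3))"
    define q12 where "q12 = (\<lambda>(k1::int,k2::int,k3::int). (k-k1,k-k2))"
    define q13 where "q13 = (\<lambda>(k1::int,k2::int,k3::int). (k-k1,k-k3))"
    define q23 where "q23 = (\<lambda>(k1::int,k2::int,k3::int). (k-k2,k-k3))"
    have inj: "inj_on p12 (star_set k)" "inj_on p13 (star_set k)" "inj_on p23 (star_set k)"
      "inj_on q12 (star_set k)" "inj_on q13 (star_set k)" "inj_on q23 (star_set k)"
      by (auto simp: inj_on_def star_set_def p12_def p13_def p23_def q12_def q13_def q23_def)
    note f1 = fam[OF inj(1) r] and f2 = fam[OF inj(2) r] and f3 = fam[OF inj(3) r]
      and f4 = fam[OF inj(4) r] and f5 = fam[OF inj(5) r] and f6 = fam[OF inj(6) r]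
    define G where "G = (\<lambda>x. (HH r \<circ> p12) x + (HH r \<circ> p13) x + (HH r \<circ> p23) x
       + (HH r \<circ> q12) x + (HH r \<circ> q13) x + (HH r \<circ> q23) x)"
    have Gs: "G summable_on star_set k" unfolding G_def
      by (intro summable_on_add f1(1) f2(1) f3(1) f4(1) f5(1) f6(1))
    have "infsum G (star_set k) = infsum (HH r \<circ> p12) (star_set k) + infsum (HH r \<circ> p13) (star_set k)
       + infsum (HH r \<circ> p23) (star_set k) + infsum (HH r \<circ> q12) (star_set k)
       + infsum (HH r \<circ> q13) (star_set k) + infsum (HH r \<circ> q23) (star_set k)"
      unfolding G_def
      by (subst infsum_add, (intro summable_on_add f1(1) f2(1) f3(1) f4(1) f5(1) f6(1))+)+ simp
    also have "\<dots> \<le> 6 * S2" using f1(2) f2(2) f3(2) f4(2) f5(2) f6(2) unfolding S2_def by linarith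
    finally have Gb: "infsum G (star_set k) \<le> 6 * S2" .
    define Kp where "Kp = \<bar>real_of_int k\<bar> powr (2 + 2*\<alpha>)"
    have Kp: "Kp > 0" using k by (simp add: Kp_def)
    have pw: "Kp * star_term \<alpha> \<rho> k x \<le> Cst * G x" if "x \<in> star_set k" for x
    proof -
      obtain k1 k2 k3 where x: "x = (k1,k2,k3)" by (cases x) auto
      show ?thesis using pointwise_int[OF assms k that[unfolded x]]
        unfolding x Kp_def Cst_def G_def r_def
        by (simp add: p12_def p13_def p23_def q12_def q13_def q23_def)
    qed
    have tnn: "0 \<le> star_term \<alpha> \<rho> k x" for x
      by (cases x) (simp add: star_term_def)
    have tb: "star_term \<alpha> \<rho> k x \<le> (Cst / Kp) * G x" if "x \<in> star_set k" for x
      using pw[OF that] Kp by (simp add: field_simps)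
    have CGs: "(\<lambda>x. (Cst / Kp) * G x) summable_on star_set k"
      by (rule summable_on_cmult_right[OF Gs])
    have ts: "star_term \<alpha> \<rho> k summable_on star_set k"
      by (rule summable_on_comparison_test[OF CGs tb tnn])
    have "infsum (star_term \<alpha> \<rho> k) (star_set k) \<le> infsum (\<lambda>x. (Cst / Kp) * G x) (star_set k)"
      by (rule infsum_mono[OF ts CGs tb])
    also have "\<dots> = (Cst / Kp) * infsum G (star_set k)"
      by (rule infsum_cmult_right) (use Gs in simp)
    also have "\<dots> \<le> (Cst / Kp) * (6 * S2)"
      using Gb Cnn Kp by (intro mult_left_mono) auto
    finally have "Kp * infsum (star_term \<alpha> \<rho> k) (star_set k) \<le> Kp * ((Cst / Kp) * (6 * S2))"
      using Kp by (intro mult_left_mono) auto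
    also have "\<dots> = Cst * (6 * S2)" using Kp by simp
    finally show "star_term \<alpha> \<rho> k summable_on star_set k \<and>
     \<bar>real_of_int k\<bar> powr (2 + 2 * \<alpha>) * (\<Sum>\<^sub>\<infinity>x\<in>star_set k. star_term \<alpha> \<rho> k x) \<le> Cst * (6 * S2)"
      using ts unfolding Kp_def by simp
  qed
qed

end
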